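(* Let $n\ge1$, $a,b\in\mathbb{C}$, $\alpha_1,\dots,\alpha_n,\gamma\in\mathbb{C}$, and suppose $\gamma$ is not a negative integer. Then the series \[ F(\beta;x)=\prod_{k=1}^n x_{1k}^{\alpha_k}\left(\frac{b^{\gamma+1}}{\gamma+1}F_D\!\left(\gamma+1;-\alpha_1,\dots,-\alpha_n;\gamma+2;\frac{-x_{21}b}{x_{11}},\dots,\frac{-x_{2n}b}{x_{1n}}\right)-\frac{a^{\gamma+1}}{\gamma+1}F_D\!\left(\gamma+1;-\alpha_1,\dots,-\alpha_n;\gamma+2;\frac{-x_{21}a}{x_{11}},\dots,\frac{-x_{2n}a}{x_{1n}}\right)\right) \] is a (series) solution of the incomplete $\Delta_1\times\Delta_{n-1}$-hypergeometric system \[ \begin{cases} (\theta_{1i}+\theta_{2i}-\alpha_i)\bullet f=0, & 1\le i\le n,\\[2pt] \left(\sum_{i=1}^n\theta_{2i}+\gamma+1\right)\bullet f=[g(t,x)]_{t=a}^{t=b}, & \\[2pt] (\partial_{1i}\partial_{2j}-\partial_{1j}\partial_{2i})\bullet f=0, & 1\le i<j\le n, \end{cases} \] where $g(t,x)=t^{\gamma+1}\prod_{k=1}^n(x_{1k}+x_{2k}t)^{\alpha_k}$.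
   Context: Variables $x=(x_{ij})_{i=1,2;\,1\le j\le n}$, $\partial_{ij}=\partial/\partial x_{ij}$, $\theta_{ij}=x_{ij}\partial_{ij}$, $\beta=(\alpha_1,\dots,\alpha_n,-\gamma-1)$, $[g(t,x)]_{t=a}^{t=b}=g(b,x)-g(a,x)$ (with suitable branches of the powers). The Lauricella function of $n$ variables is \[ F_D(a,b_1,\dots,b_n,c;z_1,\dots,z_n)=\sum_{m_1,\dots,m_n\ge0}\frac{(a)_{m_1+\cdots+m_n}(b_1)_{m_1}\cdots(b_n)_{m_n}}{(c)_{m_1+\cdots+m_n}(1)_{m_1}\cdots(1)_{m_n}}z_1^{m_1}\cdots z_n^{m_n}, \] with $(s)_m=s(s+1)\cdots(s+m-1)$ the Pochhammer symbol. *)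

theory Defs
  imports "HOL-Analysis.Analysis"
begin

text \<open>Points x = (x_ij), i = 1,2, 1 <= j <= n, are represented as functions
  nat => nat => complex; only the entries with i in {1,2}, j in {1..n} matter.\<close>

definition lauricella_FD ::
  "nat \<Rightarrow> complex \<Rightarrow> (nat \<Rightarrow> complex) \<Rightarrow> complex \<Rightarrow> (nat \<Rightarrow> complex) \<Rightarrow> complex" where
  "lauricella_FD n a b c z =
     (\<Sum>\<^sub>\<infinity> m \<in> PiE {1..n} (\<lambda>_. UNIV).
        pochhammer a (\<Sum>k=1..n. m k) * (\<Prod>k=1..n. pochhammer (b k) (m k))
        / (pochhammer c (\<Sum>k=1..n. m k) * (\<Prod>k=1..n. pochhammer 1 (m k)))
        * (\<Prod>k=1..n. z k ^ m k))"

definition partial_x ::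
  "nat \<Rightarrow> nat \<Rightarrow> ((nat \<Rightarrow> nat \<Rightarrow> complex) \<Rightarrow> complex) \<Rightarrow> (nat \<Rightarrow> nat \<Rightarrow> complex) \<Rightarrow> complex" where
  "partial_x i j f x = deriv (\<lambda>z. f (x(i := (x i)(j := z)))) (x i j)"

definition theta_x ::
  "nat \<Rightarrow> nat \<Rightarrow> ((nat \<Rightarrow> nat \<Rightarrow> complex) \<Rightarrow> complex) \<Rightarrow> (nat \<Rightarrow> nat \<Rightarrow> complex) \<Rightarrow> complex" where
  "theta_x i j f x = x i j * partial_x i j f x"

text \<open>The series F(beta; x).  Powers are principal branches (complex powr).\<close>
definition F_series ::
  "nat \<Rightarrow> (nat \<Rightarrow> complex) \<Rightarrow> complex \<Rightarrow> complex \<Rightarrow> complex \<Rightarrow> (nat \<Rightarrow> nat \<Rightarrow> complex) \<Rightarrow> complex" where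
  "F_series n \<alpha> \<gamma> a b x =
     (\<Prod>k=1..n. x 1 k powr \<alpha> k) *
     (b powr (\<gamma> + 1) / (\<gamma> + 1) *
        lauricella_FD n (\<gamma> + 1) (\<lambda>k. - \<alpha> k) (\<gamma> + 2) (\<lambda>k. - x 2 k * b / x 1 k)
      - a powr (\<gamma> + 1) / (\<gamma> + 1) *
        lauricella_FD n (\<gamma> + 1) (\<lambda>k. - \<alpha> k) (\<gamma> + 2) (\<lambda>k. - x 2 k * a / x 1 k))"

text \<open>g(t,x) = t^(gamma+1) * prod_k (x_1k + x_2k t)^(alpha_k), where the branch of
  (x_1k + x_2k t)^(alpha_k) is fixed as x_1k^(alpha_k) * (1 + x_2k t / x_1k)^(alpha_k)
  (principal branches), i.e. the branch compatible with the prefactor of F.\<close>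
definition g_fun ::
  "nat \<Rightarrow> (nat \<Rightarrow> complex) \<Rightarrow> complex \<Rightarrow> complex \<Rightarrow> (nat \<Rightarrow> nat \<Rightarrow> complex) \<Rightarrow> complex" where
  "g_fun n \<alpha> \<gamma> t x =
     t powr (\<gamma> + 1) * (\<Prod>k=1..n. x 1 k powr \<alpha> k * (1 + x 2 k * t / x 1 k) powr \<alpha> k)"

end

theory Submission
  imports Defs "HOL-Complex_Analysis.Complex_Analysis"
begin


abbreviation MI :: "nat \<Rightarrow> (nat \<Rightarrow> nat) set" where "MI n \<equiv> PiE {1..n} (\<lambda>_. UNIV)"
definition deg :: "nat \<Rightarrow> (nat\<Rightarrow>nat) \<Rightarrow> nat" where "deg n m = (\<Sum>k=1..n. m k)"
definition mon :: "nat \<Rightarrow> (nat\<Rightarrow>complex) \<Rightarrow> (nat\<Rightarrow>nat) \<Rightarrow> complex" where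
  "mon n u m = (\<Prod>k=1..n. u k ^ m k)"
definition ps :: "nat \<Rightarrow> ((nat\<Rightarrow>nat) \<Rightarrow> complex) \<Rightarrow> (nat\<Rightarrow>complex) \<Rightarrow> complex" where
  "ps n C u = (\<Sum>\<^sub>\<infinity>m\<in>MI n. C m * mon n u m)"
definition good :: "nat \<Rightarrow> ((nat\<Rightarrow>nat) \<Rightarrow> complex) \<Rightarrow> bool" where
  "good n C \<longleftrightarrow> (\<forall>\<rho>::real. 0 < \<rho> \<and> \<rho> < 1 \<longrightarrow> (\<lambda>m. norm (C m) * \<rho> ^ deg n m) summable_on MI n)"
definition dC :: "nat \<Rightarrow> ((nat\<Rightarrow>nat) \<Rightarrow> complex) \<Rightarrow> ((nat\<Rightarrow>nat) \<Rightarrow> complex)" where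
  "dC j C = (\<lambda>m. of_nat (m j + 1) * C (m(j := m j + 1)))"
definition PD :: "nat \<Rightarrow> (nat \<Rightarrow> complex) set" where
  "PD n = {u. \<forall>k\<in>{1..n}. norm (u k) < 1}"

lemma upd_MI: "m \<in> MI n \<Longrightarrow> j \<in> {1..n} \<Longrightarrow> m(j:=x) \<in> MI n"
  by (auto simp: PiE_iff extensional_def)

lemma deg_upd: assumes "j \<in> {1..n}" shows "deg n (m(j:=m j + 1)) = Suc (deg n m)"
proof -
  have "deg n (m(j:=m j + 1)) = (m j + 1) + (\<Sum>k\<in>{1..n}-{j}. m k)"
    unfolding deg_def using assms by (subst sum.remove[of _ j]) (auto intro!: sum.cong)
  also have "\<dots> = Suc (deg n m)"
    unfolding deg_def using assms by (subst (2) sum.remove[of _ j]) auto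
  finally show ?thesis .
qed

lemma mon_upd: assumes "j \<in> {1..n}"
  shows "mon n (u(j:=w)) m = w ^ m j * (\<Prod>k\<in>{1..n}-{j}. u k ^ m k)"
  unfolding mon_def using assms by (subst prod.remove[of _ j]) (auto intro!: prod.cong)

lemma mon_split: assumes "j \<in> {1..n}"
  shows "mon n u m = u j ^ m j * (\<Prod>k\<in>{1..n}-{j}. u k ^ m k)"
  using mon_upd[OF assms, of u "u j" m] by simp

lemma norm_mon_le: assumes "\<forall>k\<in>{1..n}. norm (u k) \<le> \<rho>"
  shows "norm (mon n u m) \<le> \<rho> ^ deg n m"
proof -
  have "norm (mon n u m) = (\<Prod>k=1..n. norm (u k) ^ m k)"
    unfolding mon_def by (simp add: prod_norm[symmetric] norm_power)
  also have "\<dots> \<le> (\<Prod>k=1..n. \<rho> ^ m k)"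
  proof (rule prod_mono)
    fix k assume "k \<in> {1..n}"
    thus "0 \<le> norm (u k) ^ m k \<and> norm (u k) ^ m k \<le> \<rho> ^ m k" using assms by (simp add: power_mono)
  qed
  also have "\<dots> = \<rho> ^ deg n m" unfolding deg_def by (simp add: power_sum)
  finally show ?thesis .
qed

lemma PD_bound: assumes "u \<in> PD n"
  obtains \<rho> where "0 < \<rho>" "\<rho> < 1" "\<forall>k\<in>{1..n}. norm (u k) \<le> \<rho>"
proof -
  define \<rho> where "\<rho> = Max (insert (1/2) ((\<lambda>k. norm (u k)) ` {1..n}))"
  have "\<rho> < 1" using assms unfolding \<rho>_def PD_def by (subst Max_less_iff) auto
  moreover have "1/2 \<le> \<rho>" unfolding \<rho>_def by (rule Max_ge) auto
  hence "0 < \<rho>" by linarith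
  moreover have "\<forall>k\<in>{1..n}. norm (u k) \<le> \<rho>" unfolding \<rho>_def by (auto simp del: Max_insert intro!: Max_ge)
  ultimately show ?thesis using that by blast
qed

lemma good_abs_summable:
  assumes "good n C" "0 < \<rho>" "\<rho> < 1" "\<forall>k\<in>{1..n}. norm (u k) \<le> \<rho>"
  shows "(\<lambda>m. norm (C m * mon n u m)) summable_on MI n"
proof (rule summable_on_comparison_test)
  show "(\<lambda>m. norm (C m) * \<rho> ^ deg n m) summable_on MI n" using assms unfolding good_def by blast
  show "norm (C m * mon n u m) \<le> norm (C m) * \<rho> ^ deg n m" for m
    unfolding norm_mult by (intro mult_left_mono norm_mon_le assms) auto
qed auto

lemma good_abs_summable_PD:
  assumes "good n C" "u \<in> PD n"
  shows "(\<lambda>m. norm (C m * mon n u m)) summable_on MI n"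
proof -
  obtain \<rho> where "0 < \<rho>" "\<rho> < 1" "\<forall>k\<in>{1..n}. norm (u k) \<le> \<rho>" using PD_bound[OF assms(2)] .
  thus ?thesis using good_abs_summable[OF assms(1)] by blast
qed

lemma good_summable_PD:
  assumes "good n C" "u \<in> PD n"
  shows "(\<lambda>m. C m * mon n u m) summable_on MI n"
  by (rule abs_summable_summable[OF good_abs_summable_PD[OF assms]])

lemma nbound: fixes \<rho> \<rho>' :: real assumes "0 < \<rho>" "\<rho> < \<rho>'"
  shows "\<exists>K. \<forall>N::nat. of_nat N * \<rho> ^ N \<le> K * \<rho>' ^ N"
proof -
  define \<delta> where "\<delta> = \<rho>'/\<rho> - 1"
  have d: "\<delta> > 0" using assms unfolding \<delta>_def by (simp add: field_simps)
  have "of_nat N * \<rho> ^ N \<le> (1/\<delta>) * \<rho>' ^ N" for N :: nat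
  proof -
    have "1 + of_nat N * \<delta> \<le> (1 + \<delta>) ^ N" using d by (intro Bernoulli_inequality) auto
    hence "of_nat N * \<delta> \<le> (\<rho>'/\<rho>) ^ N" unfolding \<delta>_def by simp
    hence "of_nat N * \<delta> * \<rho> ^ N \<le> (\<rho>'/\<rho>) ^ N * \<rho> ^ N"
      using assms by (intro mult_right_mono) auto
    also have "\<dots> = \<rho>' ^ N" using assms by (simp add: power_divide)
    finally show ?thesis using d by (simp add: field_simps)
  qed
  thus ?thesis by blast
qed

lemma inj_h: "inj_on (\<lambda>m::nat\<Rightarrow>nat. m(j := m j + 1)) A"
proof (rule inj_onI)
  fix m1 m2 :: "nat \<Rightarrow> nat" assume h: "m1(j := m1 j + 1) = m2(j := m2 j + 1)"
  show "m1 = m2"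
  proof
    fix x show "m1 x = m2 x"
      using fun_cong[OF h, of x] by (cases "x = j") auto
  qed
qed

lemma good_dC: assumes "good n C" "j \<in> {1..n}" shows "good n (dC j C)"
  unfolding good_def
proof (intro allI impI)
  fix \<rho> :: real assume r: "0 < \<rho> \<and> \<rho> < 1"
  define \<rho>' where "\<rho>' = (1+\<rho>)/2"
  have r': "\<rho> < \<rho>'" "\<rho>' < 1" "0 < \<rho>'" using r by (auto simp: \<rho>'_def)
  obtain K where K: "\<forall>N::nat. of_nat N * \<rho> ^ N \<le> K * \<rho>' ^ N" using nbound[of \<rho> \<rho>'] r r' by auto
  define h where "h = (\<lambda>m::nat\<Rightarrow>nat. m(j := m j + 1))"
  have inj: "inj_on h (MI n)" unfolding h_def by (rule inj_h)
  have sG: "(\<lambda>m. norm (C m) * \<rho>' ^ deg n m) summable_on MI n" using assms r' unfolding good_def by blast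
  hence "(\<lambda>m. norm (C m) * \<rho>' ^ deg n m) summable_on h ` MI n"
  proof (rule summable_on_subset_banach)
    show "h ` MI n \<subseteq> MI n" using upd_MI[OF _ assms(2)] unfolding h_def by blast
  qed
  hence "((\<lambda>m. norm (C m) * \<rho>' ^ deg n m) \<circ> h) summable_on MI n" using summable_on_reindex[OF inj] by blast
  hence s2: "(\<lambda>m. (K/\<rho>) * (norm (C (h m)) * \<rho>' ^ deg n (h m))) summable_on MI n"
    by (intro summable_on_cmult_right) (simp add: o_def)
  show "(\<lambda>m. norm (dC j C m) * \<rho> ^ deg n m) summable_on MI n"
  proof (rule summable_on_comparison_test[OF s2])
    fix m assume m: "m \<in> MI n"
    have dh: "deg n (h m) = Suc (deg n m)" using deg_upd[OF assms(2)] h_def by simp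
    have mj: "m j \<le> deg n m" unfolding deg_def using assms(2) by (intro member_le_sum) auto
    have "real (m j + 1) * \<rho> ^ deg n m \<le> real (Suc (deg n m)) * \<rho> ^ deg n m"
      using mj r by (intro mult_right_mono) auto
    also have "\<dots> = (real (Suc (deg n m)) * \<rho> ^ Suc (deg n m)) / \<rho>" using r by simp
    also have "\<dots> \<le> (K * \<rho>' ^ Suc (deg n m)) / \<rho>" using r K[rule_format, of "Suc (deg n m)"] by (intro divide_right_mono) auto
    finally have A: "real (m j + 1) * \<rho> ^ deg n m \<le> (K/\<rho>) * \<rho>' ^ deg n (h m)" using dh by simp
    have "norm (dC j C m) * \<rho> ^ deg n m = norm (C (h m)) * (real (m j + 1) * \<rho> ^ deg n m)"
      unfolding dC_def h_def norm_mult norm_of_nat by simp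
    also have "\<dots> \<le> norm (C (h m)) * ((K/\<rho>) * \<rho>' ^ deg n (h m))"
      using A by (intro mult_left_mono) auto
    finally show "norm (dC j C m) * \<rho> ^ deg n m \<le> K / \<rho> * (norm (C (h m)) * \<rho>' ^ deg n (h m))"
      by (simp add: mult_ac)
    show "0 \<le> norm (dC j C m) * \<rho> ^ deg n m" using r by simp
  qed
qed

lemma reidx:
  assumes "j \<in> {1..n}" "\<And>m. m \<in> MI n \<Longrightarrow> m j = 0 \<Longrightarrow> f m = 0"
  shows "(\<Sum>\<^sub>\<infinity>m\<in>MI n. f (m(j := m j + 1))) = (\<Sum>\<^sub>\<infinity>m\<in>MI n. f m)"
proof -
  have bij: "bij_betw (\<lambda>m. m(j := m j + 1)) (MI n) {m\<in>MI n. m j \<noteq> 0}"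
  proof (rule bij_betw_byWitness[where f'="\<lambda>m. m(j := m j - 1)"])
    show "\<forall>a\<in>MI n. (a(j := a j + 1))(j := (a(j := a j + 1)) j - 1) = a" by auto
    show "\<forall>a\<in>{m \<in> MI n. m j \<noteq> 0}. (a(j := a j - 1))(j := (a(j := a j - 1)) j + 1) = a" by auto
    show "(\<lambda>m. m(j := m j + 1)) ` MI n \<subseteq> {m \<in> MI n. m j \<noteq> 0}" using assms(1) by (auto intro: upd_MI)
    show "(\<lambda>m. m(j := m j - 1)) ` {m \<in> MI n. m j \<noteq> 0} \<subseteq> MI n" using assms(1) by (auto intro: upd_MI)
  qed
  have "(\<Sum>\<^sub>\<infinity>m\<in>MI n. f (m(j := m j + 1))) = (\<Sum>\<^sub>\<infinity>m\<in>{m\<in>MI n. m j \<noteq> 0}. f m)"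
    by (rule infsum_reindex_bij_betw[OF bij])
  also have "\<dots> = (\<Sum>\<^sub>\<infinity>m\<in>MI n. f m)" by (rule infsum_cong_neutral) (auto simp: assms)
  finally show ?thesis .
qed

lemma uniform_limit_infsum:
  fixes f :: "'a \<Rightarrow> 'b \<Rightarrow> complex"
  assumes M: "M summable_on A" and Mnn: "\<And>m. m\<in>A \<Longrightarrow> 0 \<le> M m"
    and bnd: "\<And>m w. m\<in>A \<Longrightarrow> w\<in>K \<Longrightarrow> norm (f m w) \<le> M m"
  shows "uniform_limit K (\<lambda>X w. \<Sum>m\<in>X. f m w) (\<lambda>w. \<Sum>\<^sub>\<infinity>m\<in>A. f m w) (finite_subsets_at_top A)"
  unfolding uniform_limit_iff
proof (intro allI impI)
  fix e :: real assume e: "e > 0"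
  have "(sum M \<longlongrightarrow> infsum M A) (finite_subsets_at_top A)"
    using has_sum_infsum[OF M] unfolding has_sum_def .
  hence "\<forall>\<^sub>F X in finite_subsets_at_top A. dist (sum M X) (infsum M A) < e" using e tendsto_iff by blast
  then obtain X0 where X0: "finite X0" "X0 \<subseteq> A"
      "\<And>Y. finite Y \<and> X0 \<subseteq> Y \<and> Y \<subseteq> A \<Longrightarrow> dist (sum M Y) (infsum M A) < e"
    unfolding eventually_finite_subsets_at_top by blast
  show "\<forall>\<^sub>F X in finite_subsets_at_top A. \<forall>w\<in>K. dist (\<Sum>m\<in>X. f m w) (\<Sum>\<^sub>\<infinity>m\<in>A. f m w) < e"
    unfolding eventually_finite_subsets_at_top
  proof (intro exI[of _ X0] conjI allI impI ballI X0(1,2))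
    fix Y w assume Y: "finite Y \<and> X0 \<subseteq> Y \<and> Y \<subseteq> A" and w: "w \<in> K"
    have AY: "A = Y \<union> (A - Y)" using Y by blast
    have sMd: "M summable_on (A - Y)" using M by (rule summable_on_subset_banach) auto
    have sfA: "(\<lambda>m. norm (f m w)) summable_on A"
      by (rule summable_on_comparison_test[OF M]) (use bnd w in auto)
    have sfd: "(\<lambda>m. norm (f m w)) summable_on (A - Y)" using sfA by (rule summable_on_subset_banach) auto
    have sf: "(\<lambda>m. f m w) summable_on (A - Y)" using sfd by (rule abs_summable_summable)
    have fin: "finite Y" using Y by auto
    have eqf: "(\<Sum>\<^sub>\<infinity>m\<in>A. f m w) = (\<Sum>m\<in>Y. f m w) + (\<Sum>\<^sub>\<infinity>m\<in>A-Y. f m w)"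
      using infsum_Un_disjoint[of "\<lambda>m. f m w" Y "A-Y"] fin sf AY by simp
    have eqM: "infsum M A = sum M Y + infsum M (A-Y)"
      using infsum_Un_disjoint[of M Y "A-Y"] fin sMd AY by simp
    have "dist (\<Sum>m\<in>Y. f m w) (\<Sum>\<^sub>\<infinity>m\<in>A. f m w) = norm (\<Sum>\<^sub>\<infinity>m\<in>A-Y. f m w)"
      using eqf by (simp add: dist_norm)
    also have "\<dots> \<le> (\<Sum>\<^sub>\<infinity>m\<in>A-Y. norm (f m w))" by (rule norm_infsum_bound) (rule sfd)
    also have "\<dots> \<le> infsum M (A-Y)" by (rule infsum_mono[OF sfd sMd]) (use bnd w in auto)
    also have "\<dots> = infsum M A - sum M Y" using eqM by simp
    also have "\<dots> < e" using X0(3)[OF Y] by (simp add: dist_norm abs_if split: if_splits)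
    finally show "dist (\<Sum>m\<in>Y. f m w) (\<Sum>\<^sub>\<infinity>m\<in>A. f m w) < e" .
  qed
qed

lemma ps_deriv:
  assumes C: "good n C" and u: "u \<in> PD n" and j: "j \<in> {1..n}"
  shows "((\<lambda>z. ps n C (u(j:=z))) has_field_derivative ps n (dC j C) u) (at (u j))"
proof -
  obtain \<rho>0 where r0: "0 < \<rho>0" "\<rho>0 < 1" "\<forall>k\<in>{1..n}. norm (u k) \<le> \<rho>0" using PD_bound[OF u] .
  define r where "r = (1-\<rho>0)/2"
  define \<rho> where "\<rho> = \<rho>0 + r"
  have rr: "0 < r" "0 < \<rho>" "\<rho> < 1" using r0(1,2) unfolding r_def \<rho>_def by (auto simp: field_simps)
  define R where "R m = (\<Prod>k\<in>{1..n}-{j}. u k ^ m k)" for m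
  define f where "f m w = C m * (w ^ m j * R m)" for m w
  define f' where "f' m w = C m * (of_nat (m j) * w ^ (m j - 1) * R m)" for m w
  have fps: "ps n C (u(j:=w)) = (\<Sum>\<^sub>\<infinity>m\<in>MI n. f m w)" for w
    unfolding ps_def f_def R_def using mon_upd[OF j] by simp
  have bnd: "norm (f m w) \<le> norm (C m) * \<rho> ^ deg n m" if "m \<in> MI n" "w \<in> cball (u j) r" for m w
  proof -
    have "norm w \<le> norm (u j) + r" using that(2) norm_triangle_sub[of w "u j"]
      by (auto simp: dist_norm norm_minus_commute)
    moreover have "norm (u j) \<le> \<rho>0" using r0(3) j by blast
    ultimately have "norm w \<le> \<rho>" unfolding \<rho>_def by linarith
    hence "\<forall>k\<in>{1..n}. norm ((u(j:=w)) k) \<le> \<rho>" using r0(3) rr by (auto simp: \<rho>_def)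
    hence "norm (mon n (u(j:=w)) m) \<le> \<rho> ^ deg n m" by (rule norm_mon_le)
    moreover have "f m w = C m * mon n (u(j:=w)) m" unfolding f_def R_def using mon_upd[OF j] by simp
    ultimately show ?thesis by (simp add: norm_mult mult_left_mono)
  qed
  have sM: "(\<lambda>m. norm (C m) * \<rho> ^ deg n m) summable_on MI n" using C rr unfolding good_def by blast
  have ul: "uniform_limit (cball (u j) r) (\<lambda>X w. \<Sum>m\<in>X. f m w) (\<lambda>w. \<Sum>\<^sub>\<infinity>m\<in>MI n. f m w)
              (finite_subsets_at_top (MI n))"
    by (rule uniform_limit_infsum[OF sM]) (use bnd rr in auto)
  have der: "(f m has_field_derivative f' m w) (at w)" for m w
    unfolding f_def f'_def by (auto intro!: derivative_eq_intros)
  have cont: "\<forall>\<^sub>F X in finite_subsets_at_top (MI n). continuous_on (cball (u j) r) (\<lambda>w. \<Sum>m\<in>X. f m w) \<and>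
       (\<forall>w\<in>ball (u j) r. ((\<lambda>w. \<Sum>m\<in>X. f m w) has_field_derivative (\<Sum>m\<in>X. f' m w)) (at w))"
  proof (intro always_eventually allI conjI ballI)
    fix X :: "(nat \<Rightarrow> nat) set"
    show "continuous_on (cball (u j) r) (\<lambda>w. \<Sum>m\<in>X. f m w)"
      unfolding f_def by (intro continuous_intros)
    fix w show "((\<lambda>w. \<Sum>m\<in>X. f m w) has_field_derivative (\<Sum>m\<in>X. f' m w)) (at w)"
      by (rule DERIV_sum) (rule der)
  qed
  obtain g' where g': "\<And>w. w \<in> ball (u j) r \<Longrightarrow>
      ((\<lambda>w. \<Sum>\<^sub>\<infinity>m\<in>MI n. f m w) has_field_derivative (g' w)) (at w) \<and>
      ((\<lambda>X. \<Sum>m\<in>X. f' m w) \<longlongrightarrow> g' w) (finite_subsets_at_top (MI n))"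
    using has_complex_derivative_uniform_limit[OF cont ul _ rr(1)] by auto
  have uj: "u j \<in> ball (u j) r" using rr by simp
  have hs: "((\<lambda>m. f' m (u j)) has_sum g' (u j)) (MI n)"
    using g'[OF uj] unfolding has_sum_def by blast
  have "g' (u j) = (\<Sum>\<^sub>\<infinity>m\<in>MI n. f' m (u j))" using hs by (simp add: infsumI)
  also have "\<dots> = (\<Sum>\<^sub>\<infinity>m\<in>MI n. f' (m(j := m j + 1)) (u j))"
    by (rule reidx[symmetric, OF j]) (simp add: f'_def)
  also have "\<dots> = ps n (dC j C) u"
    unfolding ps_def
  proof (rule infsum_cong)
    fix m assume "m \<in> MI n"
    have "R (m(j := m j + 1)) = R m" unfolding R_def by (intro prod.cong) auto
    thus "f' (m(j := m j + 1)) (u j) = dC j C m * mon n u m"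
      unfolding f'_def dC_def mon_split[OF j, of u m] by (simp add: mult_ac R_def)
  qed
  finally have "g' (u j) = ps n (dC j C) u" .
  moreover have "(\<lambda>z. ps n C (u(j:=z))) = (\<lambda>w. \<Sum>\<^sub>\<infinity>m\<in>MI n. f m w)" using fps by auto
  ultimately show ?thesis using g'[OF uj] by simp
qed



lemma good_le:
  assumes C: "good n C" and B: "0 \<le> B"
    and le: "\<And>m. m \<in> MI n \<Longrightarrow> norm (D m) \<le> B * (1 + real (deg n m)) * norm (C m)"
  shows "good n D"
  unfolding good_def
proof (intro allI impI)
  fix \<rho> :: real assume r: "0 < \<rho> \<and> \<rho> < 1"
  define \<rho>' where "\<rho>' = (1+\<rho>)/2"
  have r': "\<rho> < \<rho>'" "\<rho>' < 1" "0 < \<rho>'" using r by (auto simp: \<rho>'_def)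
  obtain K where K: "\<forall>N::nat. of_nat N * \<rho> ^ N \<le> K * \<rho>' ^ N" using nbound[of \<rho> \<rho>'] r r' by auto
  have sG: "(\<lambda>m. (B * (1 + K)) * (norm (C m) * \<rho>' ^ deg n m)) summable_on MI n"
    using C r' unfolding good_def by (intro summable_on_cmult_right) blast
  show "(\<lambda>m. norm (D m) * \<rho> ^ deg n m) summable_on MI n"
  proof (rule summable_on_comparison_test[OF sG])
    fix m assume m: "m \<in> MI n"
    have p: "\<rho> ^ deg n m \<le> \<rho>' ^ deg n m" using r r' by (intro power_mono) auto
    have "(1 + real (deg n m)) * \<rho> ^ deg n m \<le> (1 + K) * \<rho>' ^ deg n m"
      using p K[rule_format, of "deg n m"] by (simp add: algebra_simps)
    hence "norm (D m) * \<rho> ^ deg n m \<le> B * norm (C m) * ((1 + real (deg n m)) * \<rho> ^ deg n m)"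
      using le[OF m] r by (smt (verit, ccfv_SIG) mult.commute mult.left_commute mult_right_mono zero_le_power)
    also have "\<dots> \<le> B * norm (C m) * ((1 + K) * \<rho>' ^ deg n m)"
      using \<open>(1 + real (deg n m)) * \<rho> ^ deg n m \<le> (1 + K) * \<rho>' ^ deg n m\<close> B
      by (intro mult_left_mono) auto
    finally show "norm (D m) * \<rho> ^ deg n m \<le> B * (1 + K) * (norm (C m) * \<rho>' ^ deg n m)"
      by (simp add: mult_ac)
    show "0 \<le> norm (D m) * \<rho> ^ deg n m" using r by simp
  qed
qed

lemma good_add: assumes "good n C" "good n D" shows "good n (\<lambda>m. C m + D m)"
  unfolding good_def
proof (intro allI impI)
  fix \<rho> :: real assume r: "0 < \<rho> \<and> \<rho> < 1"
  have "(\<lambda>m. norm (C m) * \<rho> ^ deg n m + norm (D m) * \<rho> ^ deg n m) summable_on MI n"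
    using assms r unfolding good_def by (intro summable_on_add) blast+
  thus "(\<lambda>m. norm (C m + D m) * \<rho> ^ deg n m) summable_on MI n"
    by (rule summable_on_comparison_test)
       (use r in \<open>auto simp: distrib_right[symmetric] intro!: mult_right_mono norm_triangle_ineq\<close>)
qed

lemma good_0: "good n (\<lambda>_. 0)" unfolding good_def by simp

lemma good_cmult: assumes "good n C" shows "good n (\<lambda>m. c * C m)"
proof (rule good_le[OF assms, of "norm c"])
  fix m :: "nat \<Rightarrow> nat"
  have "norm c * 1 \<le> norm c * (1 + real (deg n m))" by (intro mult_left_mono) auto
  thus "norm (c * C m) \<le> norm c * (1 + real (deg n m)) * norm (C m)"
    unfolding norm_mult by (intro mult_right_mono) auto
qed simp

lemma deg_ge: "j \<in> {1..n} \<Longrightarrow> m j \<le> deg n m"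
  unfolding deg_def by (intro member_le_sum) auto

lemma good_mj: assumes "good n C" "j \<in> {1..n}" shows "good n (\<lambda>m. of_nat (m j) * C m)"
proof (rule good_le[OF assms(1), of 1])
  fix m :: "nat \<Rightarrow> nat" assume "m \<in> MI n"
  have "real (m j) \<le> 1 + real (deg n m)" using deg_ge[OF assms(2), of m] by simp
  thus "norm (of_nat (m j) * C m) \<le> 1 * (1 + real (deg n m)) * norm (C m)"
    by (simp add: norm_mult mult_right_mono)
qed simp

lemma good_deg: assumes "good n C" shows "good n (\<lambda>m. of_nat (deg n m) * C m)"
  by (rule good_le[OF assms(1), of 1]) (auto simp: norm_mult intro!: mult_right_mono)

lemma good_sum: assumes "finite I" "\<And>i. i \<in> I \<Longrightarrow> good n (C i)" shows "good n (\<lambda>m. \<Sum>i\<in>I. C i m)"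
  using assms by (induction I rule: finite_induct) (auto intro!: good_add good_0)

lemma ps_add: assumes "good n C" "good n D" "u \<in> PD n"
  shows "ps n (\<lambda>m. C m + D m) u = ps n C u + ps n D u"
  unfolding ps_def distrib_right
  by (rule infsum_add) (use good_summable_PD assms in auto)

lemma ps_diff: assumes "good n C" "good n D" "u \<in> PD n"
  shows "ps n (\<lambda>m. C m - D m) u = ps n C u - ps n D u"
proof -
  have "ps n (\<lambda>m. C m - D m) u = ps n (\<lambda>m. C m + (-1) * D m) u" by simp
  also have "\<dots> = ps n C u + ps n (\<lambda>m. (-1) * D m) u"
    by (rule ps_add) (auto intro: assms good_cmult[of n D "-1", simplified])
  also have "ps n (\<lambda>m. (-1) * D m) u = - ps n D u"
    unfolding ps_def by (simp add: infsum_uminus)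
  finally show ?thesis by simp
qed

lemma ps_cmult: "ps n (\<lambda>m. c * C m) u = c * ps n C u"
  unfolding ps_def by (simp add: mult.assoc infsum_cmult_right')

lemma ps_sum: assumes "finite I" "\<And>i. i \<in> I \<Longrightarrow> good n (C i)" "u \<in> PD n"
  shows "ps n (\<lambda>m. \<Sum>i\<in>I. C i m) u = (\<Sum>i\<in>I. ps n (C i) u)"
  using assms(1,2)
proof (induction I rule: finite_induct)
  case empty thus ?case by (simp add: ps_def)
next
  case (insert x F)
  have "ps n (\<lambda>m. \<Sum>i\<in>insert x F. C i m) u = ps n (\<lambda>m. C x m + (\<Sum>i\<in>F. C i m)) u"
    using insert.hyps by simp
  also have "\<dots> = ps n (C x) u + ps n (\<lambda>m. \<Sum>i\<in>F. C i m) u"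
    by (rule ps_add) (use insert assms(3) in \<open>auto intro!: good_sum\<close>)
  finally show ?case using insert by simp
qed

lemma ps_mult_var: assumes "good n C" "u \<in> PD n" "j \<in> {1..n}"
  shows "u j * ps n (dC j C) u = ps n (\<lambda>m. of_nat (m j) * C m) u"
proof -
  have "u j * ps n (dC j C) u = (\<Sum>\<^sub>\<infinity>m\<in>MI n. u j * (dC j C m * mon n u m))"
    unfolding ps_def by (simp add: infsum_cmult_right')
  also have "\<dots> = (\<Sum>\<^sub>\<infinity>m\<in>MI n. (\<lambda>m. of_nat (m j) * C m * mon n u m) (m(j := m j + 1)))"
  proof (rule infsum_cong)
    fix m assume "m \<in> MI n"
    have "(\<Prod>k\<in>{1..n}-{j}. u k ^ (m(j := m j + 1)) k) = (\<Prod>k\<in>{1..n}-{j}. u k ^ m k)"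
      by (intro prod.cong) auto
    thus "u j * (dC j C m * mon n u m) = (\<lambda>m. of_nat (m j) * C m * mon n u m) (m(j := m j + 1))"
      unfolding dC_def mon_split[OF assms(3), of u] by (simp add: mult_ac)
  qed
  also have "\<dots> = ps n (\<lambda>m. of_nat (m j) * C m) u"
    unfolding ps_def by (rule reidx[OF assms(3)]) simp
  finally show ?thesis .
qed

lemma dC_comm: "i \<noteq> j \<Longrightarrow> dC i (dC j C) = dC j (dC i C)"
  by (auto simp: dC_def fun_eq_iff fun_upd_twist)



definition P1 :: "complex \<Rightarrow> nat \<Rightarrow> complex" where
  "P1 \<gamma> N = pochhammer (\<gamma>+1) N / pochhammer (\<gamma>+2) N"
definition cc :: "complex \<Rightarrow> nat \<Rightarrow> complex" where
  "cc a p = pochhammer (-a) p / pochhammer 1 p"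
definition cprod :: "nat \<Rightarrow> (nat \<Rightarrow> complex) \<Rightarrow> (nat \<Rightarrow> nat) \<Rightarrow> complex" where
  "cprod n \<alpha> m = (\<Prod>k=1..n. cc (\<alpha> k) (m k))"
definition C0 :: "nat \<Rightarrow> (nat \<Rightarrow> complex) \<Rightarrow> complex \<Rightarrow> (nat \<Rightarrow> nat) \<Rightarrow> complex" where
  "C0 n \<alpha> \<gamma> m = P1 \<gamma> (deg n m) * cprod n \<alpha> m"

lemma FD_ps: "lauricella_FD n (\<gamma>+1) (\<lambda>k. -\<alpha> k) (\<gamma>+2) z = ps n (C0 n \<alpha> \<gamma>) z"
  unfolding lauricella_FD_def ps_def
proof (rule infsum_cong)
  fix m :: "nat \<Rightarrow> nat"
  show "pochhammer (\<gamma> + 1) (sum m {1..n}) * (\<Prod>k = 1..n. pochhammer (- \<alpha> k) (m k)) /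
         (pochhammer (\<gamma> + 2) (sum m {1..n}) * (\<Prod>k = 1..n. pochhammer 1 (m k))) *
         (\<Prod>k = 1..n. z k ^ m k) = C0 n \<alpha> \<gamma> m * mon n z m"
    unfolding C0_def P1_def cprod_def cc_def mon_def deg_def prod_dividef by simp
qed

lemma cc_gchoose: "cc a p = (-1) ^ p * (a gchoose p)"
  unfolding cc_def gbinomial_pochhammer pochhammer_fact
  by (simp add: power_mult_distrib[symmetric])

lemma cc_Suc: "of_nat (p+1) * cc a (p+1) = (of_nat p - a) * cc a p"
proof -
  have nz: "pochhammer (1::complex) p \<noteq> 0" by (simp add: pochhammer_fact[symmetric])
  have e1: "pochhammer (-a) (Suc p) = (-a + of_nat p) * pochhammer (-a) p" by (rule pochhammer_rec')
  have e2: "pochhammer (1::complex) (Suc p) = (1 + of_nat p) * pochhammer 1 p" by (rule pochhammer_rec')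
  have nz2: "(1 + of_nat p :: complex) \<noteq> 0"
    by (metis of_nat_Suc of_nat_eq_0_iff nat.distinct(1) add.commute)
  have "of_nat (p+1) * cc a (p+1) = (1 + of_nat p) * ((-a + of_nat p) * pochhammer (-a) p / ((1 + of_nat p) * pochhammer 1 p))"
    unfolding cc_def Suc_eq_plus1[symmetric] e1 e2 by simp
  also have "\<dots> = (-a + of_nat p) * pochhammer (-a) p / pochhammer 1 p" using nz2 by simp
  also have "\<dots> = (of_nat p - a) * cc a p" unfolding cc_def by simp
  finally show ?thesis .
qed

lemma P1_eq: assumes "\<forall>k::nat. \<gamma> \<noteq> - of_nat (Suc k)"
  shows "(\<gamma> + 1 + of_nat N) * P1 \<gamma> N = \<gamma> + 1"
proof -
  have nz: "pochhammer (\<gamma>+2) N \<noteq> 0"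
  proof
    assume "pochhammer (\<gamma>+2) N = 0"
    then obtain k where "\<gamma> + 2 = - of_nat k" unfolding pochhammer_eq_0_iff by blast
    hence "\<gamma> = - of_nat (Suc (Suc k))" by (simp add: algebra_simps)
    thus False using assms by blast
  qed
  have "pochhammer (\<gamma>+1) (Suc N) = (\<gamma>+1) * pochhammer (\<gamma>+2) N"
    by (simp add: pochhammer_rec add.assoc)
  moreover have "pochhammer (\<gamma>+1) (Suc N) = (\<gamma> + 1 + of_nat N) * pochhammer (\<gamma>+1) N"
    by (simp add: pochhammer_rec')
  ultimately show ?thesis unfolding P1_def using nz by (simp add: field_simps)
qed

lemma P1_bound: assumes "\<forall>k::nat. \<gamma> \<noteq> - of_nat (Suc k)"
  shows "\<exists>K. \<forall>N. norm (P1 \<gamma> N) \<le> K"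
proof -
  define N0 where "N0 = nat \<lceil>2 * norm (\<gamma>+1)\<rceil>"
  define K where "K = max 1 (Max ((\<lambda>N. norm (P1 \<gamma> N)) ` {..N0}))"
  have "norm (P1 \<gamma> N) \<le> K" for N
  proof (cases "N \<le> N0")
    case True thus ?thesis unfolding K_def by (intro max.coboundedI2 Max_ge) auto
  next
    case False
    hence "real N \<ge> 2 * norm (\<gamma>+1)" unfolding N0_def by linarith
    moreover have "norm (\<gamma> + 1 + of_nat N) \<ge> real N - norm (\<gamma>+1)"
    proof -
      have "real N = norm (of_nat N :: complex)" by simp
      also have "(of_nat N :: complex) = (\<gamma> + 1 + of_nat N) - (\<gamma>+1)" by simp
      also have "norm \<dots> \<le> norm (\<gamma> + 1 + of_nat N) + norm (\<gamma>+1)" by (rule norm_triangle_ineq4)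
      finally show ?thesis by simp
    qed
    ultimately have ge: "norm (\<gamma> + 1 + of_nat N) \<ge> norm (\<gamma>+1)" by linarith
    have "norm (\<gamma> + 1 + of_nat N) * norm (P1 \<gamma> N) = norm (\<gamma>+1)"
      using P1_eq[OF assms, of N] by (metis norm_mult)
    hence "norm (\<gamma> + 1 + of_nat N) * norm (P1 \<gamma> N) \<le> norm (\<gamma> + 1 + of_nat N) * 1" using ge by simp
    hence "norm (P1 \<gamma> N) \<le> 1 \<or> norm (\<gamma> + 1 + of_nat N) = 0"
      by (metis mult_le_cancel_left norm_ge_zero order_less_le)
    moreover have "norm (\<gamma> + 1 + of_nat N) \<noteq> 0"
    proof
      assume "norm (\<gamma> + 1 + of_nat N) = 0"
      hence "\<gamma> = - of_nat (Suc N)" by (simp add: algebra_simps add_eq_0_iff)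
      thus False using assms by blast
    qed
    ultimately show ?thesis unfolding K_def by auto
  qed
  thus ?thesis by blast
qed

lemma cc_abs_summable: assumes "norm z < 1"
  shows "summable (\<lambda>p. norm (cc a p * z ^ p))"
proof -
  have "ereal (norm z) < conv_radius (\<lambda>p. a gchoose p)" using assms by (simp add: conv_radius_gchoose)
  hence "summable (\<lambda>p. norm ((a gchoose p) * z ^ p))" by (rule abs_summable_in_conv_radius)
  thus ?thesis by (simp add: cc_gchoose norm_mult norm_power)
qed

lemma cc_has_sum: assumes "norm z < 1"
  shows "((\<lambda>p. cc a p * z ^ p) has_sum (1 - z) powr a) UNIV"
proof (rule norm_summable_imp_has_sum[OF cc_abs_summable[OF assms]])
  have e: "(\<lambda>p. cc a p * z ^ p) = (\<lambda>p. (a gchoose p) * (-z) ^ p)"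
  proof
    fix p show "cc a p * z ^ p = (a gchoose p) * (-z) ^ p"
    proof -
      have "(-z)^p = (-1)^p * z^p" by (simp add: power_mult_distrib[symmetric])
      thus ?thesis by (simp add: cc_gchoose mult_ac)
    qed
  qed
  have "(\<lambda>p. (a gchoose p) * (-z) ^ p) sums (1 + (-z)) powr a"
    by (rule gen_binomial_complex) (use assms in simp)
  thus "(\<lambda>p. cc a p * z ^ p) sums (1 - z) powr a" unfolding e by simp
qed

lemma good_C0: assumes "\<forall>k::nat. \<gamma> \<noteq> - of_nat (Suc k)" shows "good n (C0 n \<alpha> \<gamma>)"
  unfolding good_def
proof (intro allI impI)
  fix \<rho> :: real assume r: "0 < \<rho> \<and> \<rho> < 1"
  obtain K where K: "\<forall>N. norm (P1 \<gamma> N) \<le> K" using P1_bound[OF assms] by blast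
  define f where "f k p = norm (cc (\<alpha> k) p) * \<rho> ^ p" for k p
  have fnn: "0 \<le> f k p" for k p using r by (simp add: f_def)
  have fs: "Infinite_Set_Sum.abs_summable_on (f k) UNIV" for k
  proof (rule abs_summable_equivalent[THEN iffD1])
    have "summable (\<lambda>p. norm (cc (\<alpha> k) p * complex_of_real \<rho> ^ p))" using r by (intro cc_abs_summable) auto
    hence "summable (\<lambda>p. norm (f k p))" using r by (simp add: f_def norm_mult norm_power)
    thus "(\<lambda>p. norm (f k p)) summable_on UNIV" by (rule summable_nonneg_imp_summable_on) auto
  qed
  have "Infinite_Set_Sum.abs_summable_on (\<lambda>g. \<Prod>k\<in>{1..n}. f k (g k)) (MI n)"
    by (rule abs_summable_on_prod_PiE) (auto intro: fs)
  hence "(\<lambda>g. norm (\<Prod>k\<in>{1..n}. f k (g k))) summable_on MI n" by (rule abs_summable_equivalent[THEN iffD2])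
  hence s1: "(\<lambda>g. K * norm (\<Prod>k\<in>{1..n}. f k (g k))) summable_on MI n" by (rule summable_on_cmult_right)
  show "(\<lambda>m. norm (C0 n \<alpha> \<gamma> m) * \<rho> ^ deg n m) summable_on MI n"
  proof (rule summable_on_comparison_test[OF s1])
    fix m :: "nat \<Rightarrow> nat"
    have e: "norm (C0 n \<alpha> \<gamma> m) * \<rho> ^ deg n m = norm (P1 \<gamma> (deg n m)) * (\<Prod>k=1..n. f k (m k))"
      unfolding C0_def cprod_def f_def deg_def
      by (simp add: norm_mult prod_norm[symmetric] power_sum prod.distrib mult_ac)
    have "norm (\<Prod>k\<in>{1..n}. f k (m k)) = (\<Prod>k=1..n. f k (m k))" using fnn by (simp add: prod_nonneg)
    thus "norm (C0 n \<alpha> \<gamma> m) * \<rho> ^ deg n m \<le> K * norm (\<Prod>k\<in>{1..n}. f k (m k))"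
      unfolding e using K fnn by (simp add: mult_right_mono prod_nonneg)
    show "0 \<le> norm (C0 n \<alpha> \<gamma> m) * \<rho> ^ deg n m" using r by simp
  qed
qed

lemma ps_cprod: assumes "u \<in> PD n"
  shows "ps n (cprod n \<alpha>) u = (\<Prod>k=1..n. (1 - u k) powr \<alpha> k)"
proof -
  have "ps n (cprod n \<alpha>) u = (\<Sum>\<^sub>\<infinity>g\<in>MI n. \<Prod>k\<in>{1..n}. cc (\<alpha> k) (g k) * u k ^ g k)"
    unfolding ps_def cprod_def mon_def by (simp add: prod.distrib)
  also have "\<dots> = (\<Prod>k\<in>{1..n}. \<Sum>\<^sub>\<infinity>p\<in>UNIV. cc (\<alpha> k) p * u k ^ p)"
  proof (rule infsum_prod_PiE_abs)
    fix k assume "k \<in> {1..n}"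
    hence "norm (u k) < 1" using assms by (auto simp: PD_def)
    thus "(\<lambda>p. norm (cc (\<alpha> k) p * u k ^ p)) summable_on UNIV"
      by (intro summable_nonneg_imp_summable_on cc_abs_summable) auto
  qed simp
  also have "\<dots> = (\<Prod>k=1..n. (1 - u k) powr \<alpha> k)"
  proof (rule prod.cong)
    fix k assume "k \<in> {1..n}"
    hence "norm (u k) < 1" using assms by (auto simp: PD_def)
    thus "(\<Sum>\<^sub>\<infinity>p\<in>UNIV. cc (\<alpha> k) p * u k ^ p) = (1 - u k) powr \<alpha> k"
      by (intro infsumI cc_has_sum)
  qed simp
  finally show ?thesis .
qed

lemma prod_upd: fixes n j :: nat assumes "j \<in> {1..n}"
  shows "(\<Prod>k=1..n. g k ((m(j:=x)) k)) = g j x * (\<Prod>k\<in>{1..n}-{j}. g k (m k))"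
  using assms by (subst prod.remove[of _ j]) (auto intro!: prod.cong)

lemma dC_C0: assumes "j \<in> {1..n}"
  shows "dC j (C0 n \<alpha> \<gamma>) m = P1 \<gamma> (Suc (deg n m)) * ((of_nat (m j) - \<alpha> j) * cprod n \<alpha> m)"
proof -
  have c1: "cprod n \<alpha> (m(j := m j + 1)) = cc (\<alpha> j) (m j + 1) * (\<Prod>k\<in>{1..n}-{j}. cc (\<alpha> k) (m k))"
    unfolding cprod_def by (rule prod_upd[OF assms])
  have c2: "cprod n \<alpha> m = cc (\<alpha> j) (m j) * (\<Prod>k\<in>{1..n}-{j}. cc (\<alpha> k) (m k))"
    unfolding cprod_def using assms by (subst prod.remove[of _ j]) auto
  have "dC j (C0 n \<alpha> \<gamma>) m = P1 \<gamma> (Suc (deg n m)) *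
          ((of_nat (m j + 1) * cc (\<alpha> j) (m j + 1)) * (\<Prod>k\<in>{1..n}-{j}. cc (\<alpha> k) (m k)))"
    unfolding dC_def C0_def deg_upd[OF assms] c1 by (simp only: mult_ac)
  also have "\<dots> = P1 \<gamma> (Suc (deg n m)) * ((of_nat (m j) - \<alpha> j) * cprod n \<alpha> m)"
    unfolding cc_Suc c2 by (simp only: mult_ac)
  finally show ?thesis .
qed

lemma ps_cong: "(\<And>m. m \<in> MI n \<Longrightarrow> C m = D m) \<Longrightarrow> ps n C u = ps n D u"
  unfolding ps_def by (rule infsum_cong) simp

lemma FD_C:
  assumes g: "\<forall>k::nat. \<gamma> \<noteq> - of_nat (Suc k)" and u: "u \<in> PD n"
    and ij: "i \<in> {1..n}" "j \<in> {1..n}" "i \<noteq> j"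
  shows "\<alpha> i * ps n (dC j (C0 n \<alpha> \<gamma>)) u - \<alpha> j * ps n (dC i (C0 n \<alpha> \<gamma>)) u
         = (u i - u j) * ps n (dC i (dC j (C0 n \<alpha> \<gamma>))) u"
proof -
  let ?C = "C0 n \<alpha> \<gamma>"
  have gC: "good n ?C" by (rule good_C0[OF g])
  have gi: "good n (dC i ?C)" and gj: "good n (dC j ?C)" using good_dC gC ij by auto
  have "(u i - u j) * ps n (dC i (dC j ?C)) u
        = u i * ps n (dC i (dC j ?C)) u - u j * ps n (dC j (dC i ?C)) u"
    using dC_comm[OF ij(3)] by (simp add: algebra_simps)
  also have "\<dots> = ps n (\<lambda>m. of_nat (m i) * dC j ?C m) u - ps n (\<lambda>m. of_nat (m j) * dC i ?C m) u"
    using ps_mult_var[OF gj u ij(1)] ps_mult_var[OF gi u ij(2)] by simp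
  also have "\<dots> = ps n (\<lambda>m. of_nat (m i) * dC j ?C m - of_nat (m j) * dC i ?C m) u"
    by (rule ps_diff[symmetric]) (use good_mj gi gj ij u in auto)
  also have "\<dots> = ps n (\<lambda>m. \<alpha> i * dC j ?C m - \<alpha> j * dC i ?C m) u"
    by (rule ps_cong) (simp add: dC_C0[OF ij(1)] dC_C0[OF ij(2)] algebra_simps)
  also have "\<dots> = ps n (\<lambda>m. \<alpha> i * dC j ?C m) u - ps n (\<lambda>m. \<alpha> j * dC i ?C m) u"
    by (rule ps_diff) (use good_cmult gi gj u in auto)
  also have "\<dots> = \<alpha> i * ps n (dC j ?C) u - \<alpha> j * ps n (dC i ?C) u" by (simp add: ps_cmult)
  finally show ?thesis by simp
qed

lemma FD_A:
  assumes g: "\<forall>k::nat. \<gamma> \<noteq> - of_nat (Suc k)" and u: "u \<in> PD n"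
  shows "(\<Sum>i=1..n. u i * ps n (dC i (C0 n \<alpha> \<gamma>)) u) + (\<gamma> + 1) * ps n (C0 n \<alpha> \<gamma>) u
         = (\<gamma> + 1) * (\<Prod>k=1..n. (1 - u k) powr \<alpha> k)"
proof -
  let ?C = "C0 n \<alpha> \<gamma>"
  have gC: "good n ?C" by (rule good_C0[OF g])
  have "(\<Sum>i=1..n. u i * ps n (dC i ?C) u) = (\<Sum>i=1..n. ps n (\<lambda>m. of_nat (m i) * ?C m) u)"
    by (rule sum.cong) (use ps_mult_var[OF gC u] in auto)
  also have "\<dots> = ps n (\<lambda>m. \<Sum>i=1..n. of_nat (m i) * ?C m) u"
    by (rule ps_sum[symmetric]) (use good_mj gC u in auto)
  also have "\<dots> = ps n (\<lambda>m. of_nat (deg n m) * ?C m) u"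
    by (rule ps_cong) (simp add: deg_def sum_distrib_right)
  finally have e1: "(\<Sum>i=1..n. u i * ps n (dC i ?C) u) = ps n (\<lambda>m. of_nat (deg n m) * ?C m) u" .
  have "ps n (\<lambda>m. of_nat (deg n m) * ?C m) u + (\<gamma> + 1) * ps n ?C u
      = ps n (\<lambda>m. of_nat (deg n m) * ?C m + (\<gamma> + 1) * ?C m) u"
    by (subst ps_add) (use good_deg good_cmult gC u in \<open>auto simp: ps_cmult\<close>)
  also have "\<dots> = ps n (\<lambda>m. (\<gamma> + 1) * cprod n \<alpha> m) u"
  proof (rule ps_cong)
    fix m
    have e: "(\<gamma> + 1 + of_nat (deg n m)) * P1 \<gamma> (deg n m) = \<gamma> + 1" by (rule P1_eq[OF g])
    have "of_nat (deg n m) * ?C m + (\<gamma> + 1) * ?C m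
        = ((\<gamma> + 1 + of_nat (deg n m)) * P1 \<gamma> (deg n m)) * cprod n \<alpha> m"
      unfolding C0_def by (simp add: algebra_simps)
    thus "of_nat (deg n m) * ?C m + (\<gamma> + 1) * ?C m = (\<gamma> + 1) * cprod n \<alpha> m"
      unfolding e .
  qed
  also have "\<dots> = (\<gamma> + 1) * (\<Prod>k=1..n. (1 - u k) powr \<alpha> k)" by (simp add: ps_cmult ps_cprod[OF u])
  finally show ?thesis using e1 by simp
qed



definition xu :: "(nat \<Rightarrow> nat \<Rightarrow> complex) \<Rightarrow> nat \<Rightarrow> nat \<Rightarrow> complex \<Rightarrow> (nat \<Rightarrow> nat \<Rightarrow> complex)" where
  "xu x i j z = x(i := (x i)(j := z))"

lemma xu_apply: "xu x i j z i' k = (if i' = i \<and> k = j then z else x i' k)"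
  by (simp add: xu_def)

lemma xu_same [simp]: "xu x i j (x i j) = x"
  by (simp add: xu_def)

definition vv :: "complex \<Rightarrow> (nat \<Rightarrow> nat \<Rightarrow> complex) \<Rightarrow> nat \<Rightarrow> complex" where
  "vv t x = (\<lambda>k. - x 2 k * t / x 1 k)"

definition UU :: "nat \<Rightarrow> complex \<Rightarrow> complex \<Rightarrow> (nat \<Rightarrow> nat \<Rightarrow> complex) set" where
  "UU n a b = {x. \<forall>k\<in>{1..n}. x 1 k \<notin> \<real>\<^sub>\<le>\<^sub>0
                  \<and> cmod (x 2 k * a) < cmod (x 1 k) \<and> cmod (x 2 k * b) < cmod (x 1 k)}"

lemma cont_xu: "continuous (at z) (\<lambda>z. xu x i j z i' k)"
  unfolding xu_apply by (cases "i' = i \<and> k = j") (auto intro!: continuous_intros)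

lemma cont_on_xu: "continuous_on UNIV (\<lambda>z. xu x i j z i' k)"
  using cont_xu continuous_at_imp_continuous_on by blast

lemma UU_line_open:
  shows "open {z. xu x i j z \<in> UU n a b}"
proof -
  have eq: "{z. xu x i j z \<in> UU n a b} = (\<Inter>k\<in>{1..n}.
      {z. \<not> (xu x i j z 1 k \<in> \<real>\<^sub>\<le>\<^sub>0)} \<inter>
      {z. cmod (xu x i j z 2 k * a) < cmod (xu x i j z 1 k)} \<inter>
      {z. cmod (xu x i j z 2 k * b) < cmod (xu x i j z 1 k)})"
    unfolding UU_def by auto
  show ?thesis unfolding eq
  proof (intro open_INT ballI open_Int finite_atLeastAtMost)
    fix k
    have "closed ((\<lambda>z. xu x i j z 1 k) -` \<real>\<^sub>\<le>\<^sub>0)"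
      by (intro continuous_closed_vimage closed_nonpos_Reals_complex cont_xu)
    hence "open (- ((\<lambda>z. xu x i j z 1 k) -` \<real>\<^sub>\<le>\<^sub>0))" by (rule open_Compl)
    moreover have "{z. \<not> (xu x i j z 1 k \<in> \<real>\<^sub>\<le>\<^sub>0)} = - ((\<lambda>z. xu x i j z 1 k) -` \<real>\<^sub>\<le>\<^sub>0)" by auto
    ultimately show "open {z. \<not> (xu x i j z 1 k \<in> \<real>\<^sub>\<le>\<^sub>0)}" by simp
    show "open {z. cmod (xu x i j z 2 k * a) < cmod (xu x i j z 1 k)}"
      by (intro open_Collect_less continuous_intros cont_on_xu)
    show "open {z. cmod (xu x i j z 2 k * b) < cmod (xu x i j z 1 k)}"
      by (intro open_Collect_less continuous_intros cont_on_xu)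
  qed
qed

lemma UU_nonpos: "x \<in> UU n a b \<Longrightarrow> k \<in> {1..n} \<Longrightarrow> x 1 k \<notin> \<real>\<^sub>\<le>\<^sub>0"
  unfolding UU_def by auto

lemma UU_nz: "x \<in> UU n a b \<Longrightarrow> k \<in> {1..n} \<Longrightarrow> x 1 k \<noteq> 0"
  using UU_nonpos[of x n a b k] nonpos_Reals_zero_I by metis

lemma vv_PD: assumes "x \<in> UU n a b" "t = a \<or> t = b" shows "vv t x \<in> PD n"
  unfolding PD_def
proof (intro CollectI ballI)
  fix k assume k: "k \<in> {1..n}"
  have nz: "x 1 k \<noteq> 0" by (rule UU_nz[OF assms(1) k])
  have "cmod (x 2 k * t) < cmod (x 1 k)" using assms k unfolding UU_def by auto
  thus "cmod (vv t x k) < 1" using nz by (simp add: vv_def norm_divide norm_mult divide_less_eq)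
qed

lemma vv_xu: "vv t (xu x i j z) = (vv t x)(j := vv t (xu x i j z) j)"
  by (rule ext) (simp add: vv_def xu_apply)

definition dvv :: "nat \<Rightarrow> nat \<Rightarrow> complex \<Rightarrow> (nat \<Rightarrow> nat \<Rightarrow> complex) \<Rightarrow> complex" where
  "dvv i j t x = (if i = 1 then x 2 j * t / (x 1 j)^2 else - t / x 1 j)"

lemma vv_line_deriv: assumes "x 1 j \<noteq> 0" "i = 1 \<or> i = 2"
  shows "((\<lambda>z. vv t (xu x i j z) j) has_field_derivative dvv i j t x) (at (x i j))"
  using assms(2)
proof (elim disjE)
  assume i: "i = 1"
  have e: "(\<lambda>z. vv t (xu x i j z) j) = (\<lambda>z. - x 2 j * t / z)" using i by (auto simp: vv_def xu_apply)
  show ?thesis unfolding e dvv_def using i assms(1)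
    by (auto intro!: derivative_eq_intros simp: power2_eq_square field_simps)
next
  assume i: "i = 2"
  have e: "(\<lambda>z. vv t (xu x i j z) j) = (\<lambda>z. - z * t / x 1 j)" using i by (auto simp: vv_def xu_apply)
  show ?thesis unfolding e dvv_def using i assms(1)
    by (auto intro!: derivative_eq_intros simp: field_simps)
qed

lemma ps_line_deriv:
  assumes "good n C" "vv t x \<in> PD n" "x 1 j \<noteq> 0" "i = 1 \<or> i = 2" "j \<in> {1..n}"
  shows "((\<lambda>z. ps n C (vv t (xu x i j z))) has_field_derivative ps n (dC j C) (vv t x) * dvv i j t x) (at (x i j))"
proof -
  have d1: "((\<lambda>w. ps n C ((vv t x)(j := w))) has_field_derivative ps n (dC j C) (vv t x)) (at (vv t (xu x i j (x i j)) j))"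
    using ps_deriv[OF assms(1,2,5)] by simp
  have "((\<lambda>z. ps n C ((vv t x)(j := vv t (xu x i j z) j))) has_field_derivative ps n (dC j C) (vv t x) * dvv i j t x) (at (x i j))"
    by (rule DERIV_chain2[OF d1 vv_line_deriv[where x=x and j=j and i=i and t=t, OF assms(3,4)]])
  thus ?thesis by (subst vv_xu) simp
qed

definition Pf :: "nat \<Rightarrow> (nat \<Rightarrow> complex) \<Rightarrow> (nat \<Rightarrow> nat \<Rightarrow> complex) \<Rightarrow> complex" where
  "Pf n \<alpha> x = (\<Prod>k=1..n. x 1 k powr \<alpha> k)"

definition dPf :: "nat \<Rightarrow> (nat \<Rightarrow> complex) \<Rightarrow> nat \<Rightarrow> nat \<Rightarrow> (nat \<Rightarrow> nat \<Rightarrow> complex) \<Rightarrow> complex" where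
  "dPf n \<alpha> i j x = (if i = 1 then \<alpha> j / x 1 j * Pf n \<alpha> x else 0)"

lemma Pf_line_deriv:
  assumes x: "x \<in> UU n a b" and i: "i = 1 \<or> i = 2" and j: "j \<in> {1..n}"
  shows "((\<lambda>z. Pf n \<alpha> (xu x i j z)) has_field_derivative dPf n \<alpha> i j x) (at (x i j))"
proof -
  define R where "R = (\<Prod>k\<in>{1..n}-{j}. x 1 k powr \<alpha> k)"
  have e: "Pf n \<alpha> (xu x i j z) = xu x i j z 1 j powr \<alpha> j * R" for z
    unfolding Pf_def R_def using j by (subst prod.remove[of _ j]) (auto simp: xu_apply intro!: prod.cong)
  have nz: "x 1 j \<noteq> 0" and np: "x 1 j \<notin> \<real>\<^sub>\<le>\<^sub>0" using UU_nz[OF x j] UU_nonpos[OF x j] by auto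
  from i show ?thesis
  proof (elim disjE)
    assume i1: "i = 1"
    have ee: "(\<lambda>z. Pf n \<alpha> (xu x i j z)) = (\<lambda>z. z powr \<alpha> j * R)"
    proof (rule ext)
      fix z show "Pf n \<alpha> (xu x i j z) = z powr \<alpha> j * R" unfolding e using i1 by (simp add: xu_apply)
    qed
    have "((\<lambda>z. z powr \<alpha> j * R) has_field_derivative (\<alpha> j * x 1 j powr (\<alpha> j - 1)) * R) (at (x 1 j))"
      by (intro DERIV_cmult_right has_field_derivative_powr np)
    moreover have "(\<alpha> j * x 1 j powr (\<alpha> j - 1)) * R = dPf n \<alpha> i j x"
      unfolding dPf_def using i1 e[of "x 1 j"] nz by (simp add: powr_diff xu_apply)
    ultimately show ?thesis using i1 ee by simp
  next
    assume i2: "i = 2"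
    have ee: "(\<lambda>z. Pf n \<alpha> (xu x i j z)) = (\<lambda>z. x 1 j powr \<alpha> j * R)"
    proof (rule ext)
      fix z show "Pf n \<alpha> (xu x i j z) = x 1 j powr \<alpha> j * R" unfolding e using i2 by (simp add: xu_apply)
    qed
    show ?thesis unfolding ee dPf_def using i2 by (auto intro: DERIV_const)
  qed
qed

definition ee :: "nat \<Rightarrow> nat \<Rightarrow> (nat \<Rightarrow> nat \<Rightarrow> complex) \<Rightarrow> complex" where
  "ee i j x = (if i = 1 then x 2 j / (x 1 j)^2 else - 1 / x 1 j)"

lemma dvv_ee: "dvv i j t x = t * ee i j x"
  unfolding dvv_def ee_def by auto

definition GG :: "nat \<Rightarrow> ((nat\<Rightarrow>nat) \<Rightarrow> complex) \<Rightarrow> nat \<Rightarrow> complex \<Rightarrow> complex \<Rightarrow> complex \<Rightarrow> (nat \<Rightarrow> nat \<Rightarrow> complex) \<Rightarrow> complex" where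
  "GG n C p a b \<gamma> x = b powr (\<gamma>+1) / (\<gamma>+1) * b ^ p * ps n C (vv b x) - a powr (\<gamma>+1) / (\<gamma>+1) * a ^ p * ps n C (vv a x)"

lemma GG_line_deriv:
  assumes C: "good n C" and x: "x \<in> UU n a b" and i: "i = 1 \<or> i = 2" and j: "j \<in> {1..n}"
  shows "((\<lambda>z. GG n C p a b \<gamma> (xu x i j z)) has_field_derivative ee i j x * GG n (dC j C) (Suc p) a b \<gamma> x) (at (x i j))"
proof -
  have nz: "x 1 j \<noteq> 0" using UU_nz[OF x j] .
  have da: "((\<lambda>z. ps n C (vv a (xu x i j z))) has_field_derivative ps n (dC j C) (vv a x) * dvv i j a x) (at (x i j))"
    by (rule ps_line_deriv[OF C vv_PD[OF x] nz i j]) simp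
  have db: "((\<lambda>z. ps n C (vv b (xu x i j z))) has_field_derivative ps n (dC j C) (vv b x) * dvv i j b x) (at (x i j))"
    by (rule ps_line_deriv[OF C vv_PD[OF x] nz i j]) simp
  have "((\<lambda>z. GG n C p a b \<gamma> (xu x i j z)) has_field_derivative
     b powr (\<gamma>+1) / (\<gamma>+1) * b ^ p * (ps n (dC j C) (vv b x) * dvv i j b x)
     - a powr (\<gamma>+1) / (\<gamma>+1) * a ^ p * (ps n (dC j C) (vv a x) * dvv i j a x)) (at (x i j))"
    unfolding GG_def by (intro DERIV_diff DERIV_cmult da db)
  moreover have "b powr (\<gamma>+1) / (\<gamma>+1) * b ^ p * (ps n (dC j C) (vv b x) * dvv i j b x)
     - a powr (\<gamma>+1) / (\<gamma>+1) * a ^ p * (ps n (dC j C) (vv a x) * dvv i j a x)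
     = ee i j x * GG n (dC j C) (Suc p) a b \<gamma> x"
    unfolding GG_def dvv_ee by (simp add: algebra_simps)
  ultimately show ?thesis by simp
qed

lemma F_eq: "F_series n \<alpha> \<gamma> a b x = Pf n \<alpha> x * GG n (C0 n \<alpha> \<gamma>) 0 a b \<gamma> x"
  unfolding F_series_def GG_def Pf_def FD_ps[symmetric] vv_def by simp

definition EE :: "nat \<Rightarrow> (nat \<Rightarrow> complex) \<Rightarrow> complex \<Rightarrow> complex \<Rightarrow> complex \<Rightarrow> nat \<Rightarrow> nat \<Rightarrow> (nat \<Rightarrow> nat \<Rightarrow> complex) \<Rightarrow> complex" where
  "EE n \<alpha> \<gamma> a b i j x = dPf n \<alpha> i j x * GG n (C0 n \<alpha> \<gamma>) 0 a b \<gamma> x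
       + Pf n \<alpha> x * (ee i j x * GG n (dC j (C0 n \<alpha> \<gamma>)) 1 a b \<gamma> x)"

lemma F_line_deriv:
  assumes g: "\<forall>k::nat. \<gamma> \<noteq> - of_nat (Suc k)" and x: "x \<in> UU n a b" and i: "i = 1 \<or> i = 2" and j: "j \<in> {1..n}"
  shows "((\<lambda>z. F_series n \<alpha> \<gamma> a b (xu x i j z)) has_field_derivative EE n \<alpha> \<gamma> a b i j x) (at (x i j))"
  unfolding F_eq EE_def
  by (rule DERIV_cong[OF DERIV_mult'[OF Pf_line_deriv[OF x i j] GG_line_deriv[OF good_C0[OF g] x i j]]])
     (simp add: algebra_simps)

lemma partial_xu: "partial_x i j f x = deriv (\<lambda>z. f (xu x i j z)) (x i j)"
  unfolding partial_x_def xu_def ..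

lemma partial_F:
  assumes g: "\<forall>k::nat. \<gamma> \<noteq> - of_nat (Suc k)" and x: "x \<in> UU n a b" and i: "i = 1 \<or> i = 2" and j: "j \<in> {1..n}"
  shows "partial_x i j (F_series n \<alpha> \<gamma> a b) x = EE n \<alpha> \<gamma> a b i j x"
  unfolding partial_xu by (rule DERIV_imp_deriv[OF F_line_deriv[OF g x i j]])

lemma transfer_line:
  assumes eq: "\<And>y. y \<in> UU n a b \<Longrightarrow> f y = g y" and x: "x \<in> UU n a b"
    and d: "((\<lambda>z. g (xu x i j z)) has_field_derivative D) (at (x i j))"
  shows "((\<lambda>z. f (xu x i j z)) has_field_derivative D) (at (x i j))"
proof (rule has_field_derivative_transform_within_open[OF d UU_line_open])
  show "x i j \<in> {z. xu x i j z \<in> UU n a b}" using x by simp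
  fix z assume "z \<in> {z. xu x i j z \<in> UU n a b}"
  thus "g (xu x i j z) = f (xu x i j z)" using eq by simp
qed

definition SH :: "nat \<Rightarrow> complex \<Rightarrow> complex \<Rightarrow> ((nat\<Rightarrow>nat\<Rightarrow>complex) \<Rightarrow> complex) \<Rightarrow> bool" where
  "SH n a b f \<longleftrightarrow> (\<forall>x\<in>UU n a b. \<forall>i\<in>{1,2}. \<forall>j\<in>{1..n}. (\<lambda>z. f (xu x i j z)) field_differentiable at (x i j))"

lemma SH_const: "SH n a b (\<lambda>x. c)"
  unfolding SH_def by simp

lemma SH_add: "SH n a b f \<Longrightarrow> SH n a b g \<Longrightarrow> SH n a b (\<lambda>x. f x + g x)"
  unfolding SH_def by (auto intro!: field_differentiable_add)

lemma SH_diff: "SH n a b f \<Longrightarrow> SH n a b g \<Longrightarrow> SH n a b (\<lambda>x. f x - g x)"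
  unfolding SH_def by (auto intro!: field_differentiable_diff)

lemma SH_mult: "SH n a b f \<Longrightarrow> SH n a b g \<Longrightarrow> SH n a b (\<lambda>x. f x * g x)"
  unfolding SH_def by (auto intro!: field_differentiable_mult)

lemma coord_fd: "(\<lambda>z. xu x i j z i' k) field_differentiable at w"
  unfolding xu_apply by (cases "i' = i \<and> k = j") auto

lemma SH_coord: "SH n a b (\<lambda>x. x i' k)"
  unfolding SH_def using coord_fd by auto

lemma SH_inv: assumes "k \<in> {1..n}" shows "SH n a b (\<lambda>x. inverse (x 1 k))"
  unfolding SH_def
proof (intro ballI)
  fix x i j assume x: "x \<in> UU n a b" and "i \<in> {1,2::nat}" "j \<in> {1..n}"
  have "xu x i j (x i j) 1 k \<noteq> 0" using UU_nz[OF x assms] by simp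
  thus "(\<lambda>z. inverse (xu x i j z 1 k)) field_differentiable at (x i j)"
    by (intro field_differentiable_inverse coord_fd)
qed

lemma SH_Pf: "SH n a b (Pf n \<alpha>)"
  unfolding SH_def field_differentiable_def using Pf_line_deriv by blast

lemma SH_GG: assumes "good n C" shows "SH n a b (GG n C p a b \<gamma>)"
  unfolding SH_def field_differentiable_def using GG_line_deriv[OF assms] by blast

lemma SH_ee: assumes "i' = 1 \<or> i' = 2" "j' \<in> {1..n}" shows "SH n a b (ee i' j')"
proof -
  have e: "ee i' j' = (\<lambda>x. if i' = 1 then x 2 j' * (inverse (x 1 j') * inverse (x 1 j')) else - inverse (x 1 j'))"
    by (rule ext) (simp add: ee_def power2_eq_square divide_inverse)
  have inv: "SH n a b (\<lambda>x. inverse (x (Suc 0) j'))" using SH_inv[OF assms(2)] by simp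
  show ?thesis unfolding e using assms
    by (auto intro!: SH_mult SH_coord SH_inv inv SH_diff[of _ _ _ "\<lambda>_. 0", OF SH_const, simplified])
qed

lemma SH_dPf: assumes "i' = 1 \<or> i' = 2" "j' \<in> {1..n}" shows "SH n a b (dPf n \<alpha> i' j')"
proof -
  have e: "dPf n \<alpha> i' j' = (\<lambda>x. if i' = 1 then \<alpha> j' * inverse (x 1 j') * Pf n \<alpha> x else 0)"
    by (rule ext) (simp add: dPf_def divide_inverse)
  have inv: "SH n a b (\<lambda>x. inverse (x (Suc 0) j'))" using SH_inv[OF assms(2)] by simp
  show ?thesis unfolding e using assms
    by (auto intro!: SH_mult SH_inv inv SH_const SH_Pf)
qed

lemma SH_EE:
  assumes g: "\<forall>k::nat. \<gamma> \<noteq> - of_nat (Suc k)" and "i' = 1 \<or> i' = 2" "j' \<in> {1..n}"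
  shows "SH n a b (EE n \<alpha> \<gamma> a b i' j')"
  unfolding EE_def using assms
  by (intro SH_add SH_mult SH_dPf SH_GG SH_Pf SH_ee good_C0 good_dC) auto

lemma conj1:
  assumes g: "\<forall>k::nat. \<gamma> \<noteq> - of_nat (Suc k)" and x: "x \<in> UU n a b" and i: "i \<in> {1,2}" and j: "j \<in> {1..n}"
  shows "(\<lambda>z. F_series n \<alpha> \<gamma> a b (xu x i j z)) field_differentiable at (x i j)
       \<and> (\<forall>i'\<in>{1,2}. \<forall>j'\<in>{1..n}.
            (\<lambda>z. partial_x i' j' (F_series n \<alpha> \<gamma> a b) (xu x i j z)) field_differentiable at (x i j))"
proof (intro conjI ballI)
  have i': "i = 1 \<or> i = 2" using i by auto
  show "(\<lambda>z. F_series n \<alpha> \<gamma> a b (xu x i j z)) field_differentiable at (x i j)"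
    unfolding field_differentiable_def using F_line_deriv[OF g x i' j] by blast
  fix i' j' assume i'': "i' \<in> {1,2::nat}" and j': "j' \<in> {1..n}"
  hence i2: "i' = 1 \<or> i' = 2" by auto
  obtain D where D: "((\<lambda>z. EE n \<alpha> \<gamma> a b i' j' (xu x i j z)) has_field_derivative D) (at (x i j))"
    using SH_EE[OF g i2 j', of a b] x i j unfolding SH_def field_differentiable_def by blast
  have "((\<lambda>z. partial_x i' j' (F_series n \<alpha> \<gamma> a b) (xu x i j z)) has_field_derivative D) (at (x i j))"
    by (rule transfer_line[OF _ x D]) (rule partial_F[OF g _ i2 j'])
  thus "(\<lambda>z. partial_x i' j' (F_series n \<alpha> \<gamma> a b) (xu x i j z)) field_differentiable at (x i j)"
    unfolding field_differentiable_def by blast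
qed

lemma conj2:
  assumes g: "\<forall>k::nat. \<gamma> \<noteq> - of_nat (Suc k)" and x: "x \<in> UU n a b" and i: "i \<in> {1..n}"
  shows "theta_x 1 i (F_series n \<alpha> \<gamma> a b) x + theta_x 2 i (F_series n \<alpha> \<gamma> a b) x
          - \<alpha> i * F_series n \<alpha> \<gamma> a b x = 0"
proof -
  have nz: "x 1 i \<noteq> 0" using UU_nz[OF x i] .
  have p1: "partial_x 1 i (F_series n \<alpha> \<gamma> a b) x = EE n \<alpha> \<gamma> a b 1 i x" by (rule partial_F[OF g x _ i]) simp
  have p2: "partial_x 2 i (F_series n \<alpha> \<gamma> a b) x = EE n \<alpha> \<gamma> a b 2 i x" by (rule partial_F[OF g x _ i]) simp
  show ?thesis
    unfolding theta_x_def p1 p2 EE_def dPf_def ee_def F_eq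
    using nz by (simp add: field_simps power2_eq_square)
qed

lemma conj3:
  assumes g: "\<forall>k::nat. \<gamma> \<noteq> - of_nat (Suc k)" and x: "x \<in> UU n a b"
  shows "(\<Sum>i=1..n. theta_x 2 i (F_series n \<alpha> \<gamma> a b) x) + (\<gamma> + 1) * F_series n \<alpha> \<gamma> a b x
           = g_fun n \<alpha> \<gamma> b x - g_fun n \<alpha> \<gamma> a x"
proof -
  let ?C = "C0 n \<alpha> \<gamma>"
  define sb where "sb = b powr (\<gamma>+1) / (\<gamma>+1)"
  define sa where "sa = a powr (\<gamma>+1) / (\<gamma>+1)"
  define Sb where "Sb = (\<Sum>i=1..n. vv b x i * ps n (dC i ?C) (vv b x))"
  define Sa where "Sa = (\<Sum>i=1..n. vv a x i * ps n (dC i ?C) (vv a x))"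
  have g1: "\<gamma> + 1 \<noteq> 0"
  proof
    assume "\<gamma> + 1 = 0"
    hence "\<gamma> = - of_nat (Suc 0)" by (simp add: eq_neg_iff_add_eq_0)
    thus False using g by blast
  qed
  have th: "theta_x 2 i (F_series n \<alpha> \<gamma> a b) x
      = Pf n \<alpha> x * (sb * (vv b x i * ps n (dC i ?C) (vv b x)) - sa * (vv a x i * ps n (dC i ?C) (vv a x)))"
    if i: "i \<in> {1..n}" for i
  proof -
    have nz: "x 1 i \<noteq> 0" using UU_nz[OF x i] .
    have p2: "partial_x 2 i (F_series n \<alpha> \<gamma> a b) x = EE n \<alpha> \<gamma> a b 2 i x" by (rule partial_F[OF g x _ i]) simp
    have GGe: "GG n C p a b \<gamma> x = sb * b ^ p * ps n C (vv b x) - sa * a ^ p * ps n C (vv a x)" for C p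
      unfolding GG_def sb_def sa_def ..
    have vt: "vv t x i = x 2 i * t * (-1 / x 1 i)" for t by (simp add: vv_def)
    show ?thesis
      unfolding theta_x_def p2 EE_def dPf_def ee_def GGe vt by (simp add: algebra_simps)
  qed
  have e1: "(\<Sum>i=1..n. theta_x 2 i (F_series n \<alpha> \<gamma> a b) x) = Pf n \<alpha> x * (sb * Sb - sa * Sa)"
    by (simp add: th Sb_def Sa_def sum_distrib_left sum_subtractf right_diff_distrib)
  have e2: "F_series n \<alpha> \<gamma> a b x = Pf n \<alpha> x * (sb * ps n ?C (vv b x) - sa * ps n ?C (vv a x))"
    unfolding F_eq GG_def sb_def sa_def by simp
  have "(\<Sum>i=1..n. theta_x 2 i (F_series n \<alpha> \<gamma> a b) x) + (\<gamma> + 1) * F_series n \<alpha> \<gamma> a b x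
      = Pf n \<alpha> x * (sb * (Sb + (\<gamma> + 1) * ps n ?C (vv b x)) - sa * (Sa + (\<gamma> + 1) * ps n ?C (vv a x)))"
    unfolding e1 e2 by (simp add: algebra_simps)
  also have "Sb + (\<gamma> + 1) * ps n ?C (vv b x) = (\<gamma> + 1) * (\<Prod>k=1..n. (1 - vv b x k) powr \<alpha> k)"
    unfolding Sb_def by (rule FD_A[OF g vv_PD[OF x]]) simp
  also have "Sa + (\<gamma> + 1) * ps n ?C (vv a x) = (\<gamma> + 1) * (\<Prod>k=1..n. (1 - vv a x k) powr \<alpha> k)"
    unfolding Sa_def by (rule FD_A[OF g vv_PD[OF x]]) simp
  also have "Pf n \<alpha> x * (sb * ((\<gamma> + 1) * (\<Prod>k=1..n. (1 - vv b x k) powr \<alpha> k))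
      - sa * ((\<gamma> + 1) * (\<Prod>k=1..n. (1 - vv a x k) powr \<alpha> k))) = g_fun n \<alpha> \<gamma> b x - g_fun n \<alpha> \<gamma> a x"
  proof -
    have sbg: "sb * ((\<gamma> + 1) * X) = b powr (\<gamma>+1) * X" for X unfolding sb_def using g1 by simp
    have sag: "sa * ((\<gamma> + 1) * X) = a powr (\<gamma>+1) * X" for X unfolding sa_def using g1 by simp
    show ?thesis unfolding sbg sag g_fun_def Pf_def vv_def
      by (simp add: prod.distrib algebra_simps)
  qed
  finally show ?thesis .
qed

lemma EE2_line_deriv:
  assumes g: "\<forall>k::nat. \<gamma> \<noteq> - of_nat (Suc k)" and x: "x \<in> UU n a b"
    and i: "i \<in> {1..n}" and j: "j \<in> {1..n}" and ij: "i \<noteq> j"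
  shows "((\<lambda>z. EE n \<alpha> \<gamma> a b 2 j (xu x 1 i z)) has_field_derivative
           dPf n \<alpha> 1 i x * (ee 2 j x * GG n (dC j (C0 n \<alpha> \<gamma>)) 1 a b \<gamma> x)
           + Pf n \<alpha> x * (ee 2 j x * (ee 1 i x * GG n (dC i (dC j (C0 n \<alpha> \<gamma>))) 2 a b \<gamma> x))) (at (x 1 i))"
proof -
  let ?G = "GG n (dC j (C0 n \<alpha> \<gamma>)) 1 a b \<gamma>"
  have e: "(\<lambda>z. EE n \<alpha> \<gamma> a b 2 j (xu x 1 i z)) = (\<lambda>z. Pf n \<alpha> (xu x 1 i z) * (ee 2 j x * ?G (xu x 1 i z)))"
    using ij by (auto simp: EE_def dPf_def ee_def xu_apply)
  have gd: "good n (dC j (C0 n \<alpha> \<gamma>))" by (rule good_dC[OF good_C0[OF g] j])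
  have d1: "((\<lambda>z. Pf n \<alpha> (xu x 1 i z)) has_field_derivative dPf n \<alpha> 1 i x) (at (x 1 i))"
    by (rule Pf_line_deriv[OF x _ i]) simp
  have d2a: "((\<lambda>z. ?G (xu x 1 i z)) has_field_derivative ee 1 i x * GG n (dC i (dC j (C0 n \<alpha> \<gamma>))) (Suc 1) a b \<gamma> x) (at (x 1 i))"
    by (rule GG_line_deriv[OF gd x _ i]) simp
  have d2: "((\<lambda>z. ee 2 j x * ?G (xu x 1 i z)) has_field_derivative ee 2 j x * (ee 1 i x * GG n (dC i (dC j (C0 n \<alpha> \<gamma>))) 2 a b \<gamma> x)) (at (x 1 i))"
    using DERIV_cmult[OF d2a, of "ee 2 j x"] unfolding Suc_1 .
  show ?thesis unfolding e
    by (rule DERIV_cong[OF DERIV_mult'[OF d1 d2]]) (simp add: algebra_simps)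
qed

lemma KEY:
  assumes g: "\<forall>k::nat. \<gamma> \<noteq> - of_nat (Suc k)" and x: "x \<in> UU n a b"
    and i: "i \<in> {1..n}" and j: "j \<in> {1..n}" and ij: "i \<noteq> j"
  shows "\<alpha> i * GG n (dC j (C0 n \<alpha> \<gamma>)) 1 a b \<gamma> x - \<alpha> j * GG n (dC i (C0 n \<alpha> \<gamma>)) 1 a b \<gamma> x
       = (x 2 j / x 1 j - x 2 i / x 1 i) * GG n (dC i (dC j (C0 n \<alpha> \<gamma>))) 2 a b \<gamma> x"
proof -
  let ?C = "C0 n \<alpha> \<gamma>"
  have fb: "\<alpha> i * ps n (dC j ?C) (vv b x) - \<alpha> j * ps n (dC i ?C) (vv b x)
      = (vv b x i - vv b x j) * ps n (dC i (dC j ?C)) (vv b x)"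
    by (rule FD_C[OF g vv_PD[OF x] i j ij]) simp
  have fa: "\<alpha> i * ps n (dC j ?C) (vv a x) - \<alpha> j * ps n (dC i ?C) (vv a x)
      = (vv a x i - vv a x j) * ps n (dC i (dC j ?C)) (vv a x)"
    by (rule FD_C[OF g vv_PD[OF x] i j ij]) simp
  have vb: "vv b x i - vv b x j = b * (x 2 j / x 1 j - x 2 i / x 1 i)"
    and va: "vv a x i - vv a x j = a * (x 2 j / x 1 j - x 2 i / x 1 i)"
    unfolding vv_def by (simp_all add: algebra_simps)
  define sb where "sb = b powr (\<gamma>+1) / (\<gamma>+1)"
  define sa where "sa = a powr (\<gamma>+1) / (\<gamma>+1)"
  define w where "w = x 2 j / x 1 j - x 2 i / x 1 i"
  have GGe: "GG n C p a b \<gamma> x = sb * b ^ p * ps n C (vv b x) - sa * a ^ p * ps n C (vv a x)" for C p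
    unfolding GG_def sb_def sa_def ..
  have "\<alpha> i * GG n (dC j ?C) 1 a b \<gamma> x - \<alpha> j * GG n (dC i ?C) 1 a b \<gamma> x
     = sb * b * (\<alpha> i * ps n (dC j ?C) (vv b x) - \<alpha> j * ps n (dC i ?C) (vv b x))
     - sa * a * (\<alpha> i * ps n (dC j ?C) (vv a x) - \<alpha> j * ps n (dC i ?C) (vv a x))"
    unfolding GGe by (simp add: algebra_simps)
  also have "\<dots> = sb * b * (b * w * ps n (dC i (dC j ?C)) (vv b x)) - sa * a * (a * w * ps n (dC i (dC j ?C)) (vv a x))"
    unfolding fa fb va vb w_def ..
  also have "\<dots> = w * GG n (dC i (dC j ?C)) 2 a b \<gamma> x"
    unfolding GGe by (simp add: algebra_simps power2_eq_square)
  finally show ?thesis unfolding w_def .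
qed

lemma conj4:
  assumes g: "\<forall>k::nat. \<gamma> \<noteq> - of_nat (Suc k)" and x: "x \<in> UU n a b"
    and i: "i \<in> {1..n}" and j: "j \<in> {1..n}" and ij: "i \<noteq> j"
  shows "partial_x 1 i (partial_x 2 j (F_series n \<alpha> \<gamma> a b)) x
       - partial_x 1 j (partial_x 2 i (F_series n \<alpha> \<gamma> a b)) x = 0"
proof -
  let ?F = "F_series n \<alpha> \<gamma> a b" and ?C = "C0 n \<alpha> \<gamma>"
  have D: "partial_x 1 i (partial_x 2 j ?F) x =
           dPf n \<alpha> 1 i x * (ee 2 j x * GG n (dC j ?C) 1 a b \<gamma> x)
           + Pf n \<alpha> x * (ee 2 j x * (ee 1 i x * GG n (dC i (dC j ?C)) 2 a b \<gamma> x))"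
    if i: "i \<in> {1..n}" and j: "j \<in> {1..n}" and ij: "i \<noteq> j" for i j
    unfolding partial_xu[of 1 i]
    by (rule DERIV_imp_deriv, rule transfer_line[OF _ x EE2_line_deriv[OF g x i j ij]])
       (rule partial_F[OF g _ _ j], auto)
  have nzi: "x 1 i \<noteq> 0" using UU_nz[OF x i] .
  have nzj: "x 1 j \<noteq> 0" using UU_nz[OF x j] .
  have K: "\<alpha> i * GG n (dC j ?C) 1 a b \<gamma> x - \<alpha> j * GG n (dC i ?C) 1 a b \<gamma> x
       = (x 2 j / x 1 j - x 2 i / x 1 i) * GG n (dC i (dC j ?C)) 2 a b \<gamma> x" by (rule KEY[OF g x i j ij])
  have "partial_x 1 i (partial_x 2 j ?F) x - partial_x 1 j (partial_x 2 i ?F) x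
     = - Pf n \<alpha> x / (x 1 i * x 1 j) * ((\<alpha> i * GG n (dC j ?C) 1 a b \<gamma> x - \<alpha> j * GG n (dC i ?C) 1 a b \<gamma> x)
        - (x 2 j / x 1 j - x 2 i / x 1 i) * GG n (dC i (dC j ?C)) 2 a b \<gamma> x)"
    unfolding D[OF i j ij] D[OF j i ij[symmetric]] dC_comm[OF ij] dPf_def ee_def
    using nzi nzj by (simp add: field_simps power2_eq_square)
  also have "\<dots> = 0" using K by simp
  finally show ?thesis .
qed

theorem theorem1:
  fixes n :: nat and a b \<gamma> :: complex and \<alpha> :: "nat \<Rightarrow> complex"
  assumes "n \<ge> 1"
    and "\<forall>k::nat. \<gamma> \<noteq> - of_nat (Suc k)"
  defines "U \<equiv> {x :: nat \<Rightarrow> nat \<Rightarrow> complex. \<forall>k\<in>{1..n}. x 1 k \<notin> \<real>\<^sub>\<le>\<^sub>0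
                  \<and> cmod (x 2 k * a) < cmod (x 1 k) \<and> cmod (x 2 k * b) < cmod (x 1 k)}"
    and "F \<equiv> F_series n \<alpha> \<gamma> a b"
  shows "(\<forall>x\<in>U. \<forall>i\<in>{1,2}. \<forall>j\<in>{1..n}.
            (\<lambda>z. F (x(i := (x i)(j := z)))) field_differentiable at (x i j)
          \<and> (\<forall>i'\<in>{1,2}. \<forall>j'\<in>{1..n}.
               (\<lambda>z. partial_x i' j' F (x(i := (x i)(j := z)))) field_differentiable at (x i j)))
       \<and> (\<forall>x\<in>U. \<forall>i\<in>{1..n}. theta_x 1 i F x + theta_x 2 i F x - \<alpha> i * F x = 0)
       \<and> (\<forall>x\<in>U. (\<Sum>i=1..n. theta_x 2 i F x) + (\<gamma> + 1) * F x
                   = g_fun n \<alpha> \<gamma> b x - g_fun n \<alpha> \<gamma> a x)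
       \<and> (\<forall>x\<in>U. \<forall>i j. 1 \<le> i \<and> i < j \<and> j \<le> n \<longrightarrow>
            partial_x 1 i (partial_x 2 j F) x - partial_x 1 j (partial_x 2 i F) x = 0)"
proof -
  have U: "U = UU n a b" unfolding U_def UU_def ..
  note g = assms(2)
  show ?thesis unfolding U F_def
  proof (intro conjI ballI allI impI)
    fix x i j assume "x \<in> UU n a b" "i \<in> {1,2::nat}" "j \<in> {1..n}"
    from conj1[OF g this] show "(\<lambda>z. F_series n \<alpha> \<gamma> a b (x(i := (x i)(j := z)))) field_differentiable at (x i j)"
      unfolding xu_def by blast
  next
    fix x i j i' j' assume "x \<in> UU n a b" "i \<in> {1,2::nat}" "j \<in> {1..n}" "i' \<in> {1,2::nat}" "j' \<in> {1..n}"
    from conj1[OF g this(1-3)] this(4,5)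
    show "(\<lambda>z. partial_x i' j' (F_series n \<alpha> \<gamma> a b) (x(i := (x i)(j := z)))) field_differentiable at (x i j)"
      unfolding xu_def by blast
  next
    fix x i assume "x \<in> UU n a b" "i \<in> {1..n}"
    thus "theta_x 1 i (F_series n \<alpha> \<gamma> a b) x + theta_x 2 i (F_series n \<alpha> \<gamma> a b) x
          - \<alpha> i * F_series n \<alpha> \<gamma> a b x = 0" by (rule conj2[OF g])
  next
    fix x assume "x \<in> UU n a b"
    thus "(\<Sum>i=1..n. theta_x 2 i (F_series n \<alpha> \<gamma> a b) x) + (\<gamma> + 1) * F_series n \<alpha> \<gamma> a b x
           = g_fun n \<alpha> \<gamma> b x - g_fun n \<alpha> \<gamma> a x" by (rule conj3[OF g])
  next
    fix x i j assume "x \<in> UU n a b" "1 \<le> i \<and> i < j \<and> j \<le> n"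
    thus "partial_x 1 i (partial_x 2 j (F_series n \<alpha> \<gamma> a b)) x
       - partial_x 1 j (partial_x 2 i (F_series n \<alpha> \<gamma> a b)) x = 0"
      by (intro conj4[OF g]) auto
  qed
qed

end
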